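(* In generalized non-signalling theory (box world), consider a system of boxes each of which has at least two possible outputs. Suppose $\mathbf{R}$ and $\mathbf{S}$ are vectors both representing the same effect $\mu$, where $\mathbf{R}$ has exactly one non-zero entry and $\mathbf{S}$ has no negative entries. Then $\mathbf{R}=\mathbf{S}$.
   Context: Box world (GNST): a box has a finite set of inputs and outputs. A system of boxes has as states all collections $p(\mathbf{a}|\mathbf{x})\ge0$ (output tuple $\mathbf{a}$, input tuple $\mathbf{x}$) that are normalized ($\sum_{\mathbf{a}}p(\mathbf{a}|\mathbf{x})=1$ for all $\mathbf{x}$) and no-signalling (for each box $i$, $\sum_{a_i}p(\mathbf{a}|\mathbf{x})$ is independent of $x_i$). An effect is any linear map $\mu$ from the set of states to $[0,1]$; a real vector $\mathbf{R}$ indexed by pairs $(\mathbf{a},\mathbf{x})$ represents $\mu$ if $\mu(\mathbf{p})=\sum_{\mathbf{a},\mathbf{x}}p(\mathbf{a}|\mathbf{x})R(\mathbf{a}|\mathbf{x})$ for every state $\mathbf{p}$. *)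

theory Defs
  imports Complex_Main "HOL-Library.FuncSet"
begin

text \<open>A real vector indexed by pairs (a, x) is a function of type
  (nat \<Rightarrow> 'a) \<Rightarrow> (nat \<Rightarrow> 'x) \<Rightarrow> real; only its values on tuples matter.\<close>

definition out_tuples :: "nat \<Rightarrow> (nat \<Rightarrow> 'a set) \<Rightarrow> (nat \<Rightarrow> 'a) set" where
  "out_tuples n A = PiE {..<n} A"

definition in_tuples :: "nat \<Rightarrow> (nat \<Rightarrow> 'x set) \<Rightarrow> (nat \<Rightarrow> 'x) set" where
  "in_tuples n X = PiE {..<n} X"

definition is_state ::
  "nat \<Rightarrow> (nat \<Rightarrow> 'a set) \<Rightarrow> (nat \<Rightarrow> 'x set) \<Rightarrow> ((nat \<Rightarrow> 'a) \<Rightarrow> (nat \<Rightarrow> 'x) \<Rightarrow> real) \<Rightarrow> bool" where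
  "is_state n A X p \<longleftrightarrow>
     (\<forall>a\<in>out_tuples n A. \<forall>x\<in>in_tuples n X. 0 \<le> p a x) \<and>
     (\<forall>x\<in>in_tuples n X. (\<Sum>a\<in>out_tuples n A. p a x) = 1) \<and>
     (\<forall>i<n. \<forall>a\<in>out_tuples n A. \<forall>x\<in>in_tuples n X. \<forall>x'\<in>in_tuples n X.
        (\<forall>j<n. j \<noteq> i \<longrightarrow> x j = x' j) \<longrightarrow>
        (\<Sum>b\<in>A i. p (a(i := b)) x) = (\<Sum>b\<in>A i. p (a(i := b)) x'))"

definition is_effect ::
  "nat \<Rightarrow> (nat \<Rightarrow> 'a set) \<Rightarrow> (nat \<Rightarrow> 'x set) \<Rightarrow>
   (((nat \<Rightarrow> 'a) \<Rightarrow> (nat \<Rightarrow> 'x) \<Rightarrow> real) \<Rightarrow> real) \<Rightarrow> bool" where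
  "is_effect n A X \<mu> \<longleftrightarrow>
     (\<forall>p. is_state n A X p \<longrightarrow> 0 \<le> \<mu> p \<and> \<mu> p \<le> 1) \<and>
     (\<forall>p q t. is_state n A X p \<longrightarrow> is_state n A X q \<longrightarrow> 0 \<le> t \<longrightarrow> t \<le> 1 \<longrightarrow>
        \<mu> (\<lambda>a x. t * p a x + (1 - t) * q a x) = t * \<mu> p + (1 - t) * \<mu> q)"

definition represents ::
  "nat \<Rightarrow> (nat \<Rightarrow> 'a set) \<Rightarrow> (nat \<Rightarrow> 'x set) \<Rightarrow>
   ((nat \<Rightarrow> 'a) \<Rightarrow> (nat \<Rightarrow> 'x) \<Rightarrow> real) \<Rightarrow>
   (((nat \<Rightarrow> 'a) \<Rightarrow> (nat \<Rightarrow> 'x) \<Rightarrow> real) \<Rightarrow> real) \<Rightarrow> bool" where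
  "represents n A X R \<mu> \<longleftrightarrow>
     (\<forall>p. is_state n A X p \<longrightarrow>
        \<mu> p = (\<Sum>a\<in>out_tuples n A. \<Sum>x\<in>in_tuples n X. p a x * R a x))"

end

theory Submission
  imports Defs
begin

lemma det_state:
  fixes f :: "(nat \<Rightarrow> 'x) \<Rightarrow> (nat \<Rightarrow> 'a)"
  assumes finA: "\<And>i. i < n \<Longrightarrow> finite (A i)"
    and finX: "\<And>i. i < n \<Longrightarrow> finite (X i)"
    and fin: "\<And>y. y \<in> in_tuples n X \<Longrightarrow> f y \<in> out_tuples n A"
    and loc: "\<And>j y y'. j < n \<Longrightarrow> y \<in> in_tuples n X \<Longrightarrow> y' \<in> in_tuples n X \<Longrightarrow> y j = y' j \<Longrightarrow> f y j = f y' j"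
  shows "is_state n A X (\<lambda>b y. if b = f y then 1 else 0)"
proof -
  have finO: "finite (out_tuples n A)" unfolding out_tuples_def
    by (rule finite_PiE) (auto simp: finA)
  have closed: "(\<Sum>b\<in>A k. (if a(k:=b) = f y then 1 else 0::real)) = (if (\<forall>j. j \<noteq> k \<longrightarrow> a j = f y j) then 1 else 0)"
    if "k < n" "y \<in> in_tuples n X" for k a y
  proof -
    have fk: "f y k \<in> A k" using fin[OF that(2)] that(1) by (auto simp: out_tuples_def PiE_def Pi_def)
    have eq: "\<And>b. (a(k:=b) = f y) \<longleftrightarrow> (b = f y k \<and> (\<forall>j. j \<noteq> k \<longrightarrow> a j = f y j))"
      by (auto simp: fun_eq_iff)
    show ?thesis
    proof (cases "\<forall>j. j \<noteq> k \<longrightarrow> a j = f y j")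
      case True
      then show ?thesis using fk finA[OF that(1)] by (simp add: eq sum.delta')
    next
      case False
      then have "\<And>b. \<not> (a(k:=b) = f y)" by (simp add: eq)
      then show ?thesis using False by simp
    qed
  qed
  show ?thesis
    unfolding is_state_def
  proof (intro conjI ballI allI impI)
    fix y assume y: "y \<in> in_tuples n X"
    show "(\<Sum>a\<in>out_tuples n A. if a = f y then 1 else 0) = (1::real)"
      using fin[OF y] finO by (simp add: sum.delta')
  next
    fix i a y y' assume i: "i < n" and a: "a \<in> out_tuples n A" and y: "y \<in> in_tuples n X"
      and y': "y' \<in> in_tuples n X" and ag: "\<forall>j<n. j \<noteq> i \<longrightarrow> y j = y' j"
    have "\<forall>j. j \<noteq> i \<longrightarrow> f y j = f y' j"
    proof (intro allI impI)
      fix j assume "j \<noteq> i"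
      show "f y j = f y' j"
      proof (cases "j < n")
        case True then show ?thesis using loc[OF True y y'] ag \<open>j \<noteq> i\<close> by auto
      next
        case False then show ?thesis using fin[OF y] fin[OF y']
          by (auto simp: out_tuples_def PiE_def extensional_def)
      qed
    qed
    then have "(\<forall>j. j \<noteq> i \<longrightarrow> a j = f y j) \<longleftrightarrow> (\<forall>j. j \<noteq> i \<longrightarrow> a j = f y' j)" by auto
    then show "(\<Sum>b\<in>A i. if a(i := b) = f y then 1 else 0) = (\<Sum>b\<in>A i. if a(i := b) = f y' then 1 else (0::real))"
      using closed[OF i y] closed[OF i y'] by simp
  qed simp
qed

lemma sum_single:
  fixes p T :: "(nat \<Rightarrow> 'a) \<Rightarrow> (nat \<Rightarrow> 'x) \<Rightarrow> real"
  assumes "finite O'" "finite I" "a0 \<in> O'" "x0 \<in> I"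
    and z: "\<And>a x. a \<in> O' \<Longrightarrow> x \<in> I \<Longrightarrow> (a, x) \<noteq> (a0, x0) \<Longrightarrow> T a x = 0"
  shows "(\<Sum>a\<in>O'. \<Sum>x\<in>I. p a x * T a x) = p a0 x0 * T a0 x0"
proof -
  have "(\<Sum>a\<in>O'. \<Sum>x\<in>I. p a x * T a x) =
        (\<Sum>a\<in>O'. if a = a0 then (\<Sum>x\<in>I. if x = x0 then p a0 x0 * T a0 x0 else 0) else 0)"
  proof (rule sum.cong[OF refl])
    fix a assume a: "a \<in> O'"
    show "(\<Sum>x\<in>I. p a x * T a x) = (if a = a0 then (\<Sum>x\<in>I. if x = x0 then p a0 x0 * T a0 x0 else 0) else 0)"
      using z[OF a] by (auto intro!: sum.cong sum.neutral)
  qed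
  also have "\<dots> = p a0 x0 * T a0 x0" using assms by (simp add: sum.delta')
  finally show ?thesis .
qed

theorem lemma9:
  fixes n :: nat
    and A :: "nat \<Rightarrow> 'a set" and X :: "nat \<Rightarrow> 'x set"
    and R S :: "(nat \<Rightarrow> 'a) \<Rightarrow> (nat \<Rightarrow> 'x) \<Rightarrow> real"
    and \<mu> :: "((nat \<Rightarrow> 'a) \<Rightarrow> (nat \<Rightarrow> 'x) \<Rightarrow> real) \<Rightarrow> real"
  assumes finA: "\<And>i. i < n \<Longrightarrow> finite (A i)"
    and finX: "\<And>i. i < n \<Longrightarrow> finite (X i)"
    and neX: "\<And>i. i < n \<Longrightarrow> X i \<noteq> {}"
    and twoA: "\<And>i. i < n \<Longrightarrow> card (A i) \<ge> 2"
    and eff: "is_effect n A X \<mu>"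
    and repR: "represents n A X R \<mu>"
    and repS: "represents n A X S \<mu>"
    and oneR: "\<exists>!ax. ax \<in> out_tuples n A \<times> in_tuples n X \<and> R (fst ax) (snd ax) \<noteq> 0"
    and nonnegS: "\<forall>a\<in>out_tuples n A. \<forall>x\<in>in_tuples n X. 0 \<le> S a x"
  shows "\<forall>a\<in>out_tuples n A. \<forall>x\<in>in_tuples n X. R a x = S a x"
proof -
  have finO: "finite (out_tuples n A)" unfolding out_tuples_def
    by (rule finite_PiE) (auto simp: finA)
  have finI: "finite (in_tuples n X)" unfolding in_tuples_def
    by (rule finite_PiE) (auto simp: finX)
  obtain a0 x0 where a0: "a0 \<in> out_tuples n A" and x0: "x0 \<in> in_tuples n X"
    and R0: "R a0 x0 \<noteq> 0"
    and uniq: "\<And>a x. a \<in> out_tuples n A \<Longrightarrow> x \<in> in_tuples n X \<Longrightarrow> R a x \<noteq> 0 \<Longrightarrow> a = a0 \<and> x = x0"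
    using oneR by (metis SigmaE SigmaI fst_conv snd_conv)
  have Rz: "R a x = 0" if "a \<in> out_tuples n A" "x \<in> in_tuples n X" "(a, x) \<noteq> (a0, x0)" for a x
    using uniq[OF that(1,2)] that(3) by auto
  have key: "(\<Sum>a\<in>out_tuples n A. \<Sum>x\<in>in_tuples n X. p a x * S a x) = p a0 x0 * R a0 x0"
    if "is_state n A X p" for p
    using repR repS that sum_single[OF finO finI a0 x0, of R p] Rz
    unfolding represents_def by auto
  let ?st = "\<lambda>f. (\<lambda>b y. if b = f y then 1 else 0::real)"
  have Sz: "S a x = 0" if a: "a \<in> out_tuples n A" and x: "x \<in> in_tuples n X" and ne: "(a, x) \<noteq> (a0, x0)" for a x
  proof -
    obtain f where st: "is_state n A X (?st f)" and fa: "f x = a" and fa0: "f x0 \<noteq> a0"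
    proof (cases "a = a0")
      case False
      have "is_state n A X (?st (\<lambda>y. a))"
        by (rule det_state) (use finA finX a in auto)
      then show ?thesis using that False by auto
    next
      case True
      then have "x \<noteq> x0" using ne by auto
      then obtain i where i: "i < n" and xi: "x i \<noteq> x0 i"
        using x x0 unfolding in_tuples_def by (metis PiE_ext lessThan_iff)
      have a0i: "a0 i \<in> A i" using a0 i by (auto simp: out_tuples_def PiE_def Pi_def)
      obtain c where c: "c \<in> A i" "c \<noteq> a0 i"
      proof (rule ccontr)
        assume "\<not> thesis"
        then have "A i \<subseteq> {a0 i}" using that by auto
        then have "card (A i) \<le> 1" using card_mono[of "{a0 i}" "A i"] by auto
        then show False using twoA[OF i] by simp
      qed
      define f where "f = (\<lambda>y::nat \<Rightarrow> 'x. a0(i := if y i = x i then a0 i else c))"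
      have "is_state n A X (?st f)"
      proof (rule det_state)
        fix y assume "y \<in> in_tuples n X"
        show "f y \<in> out_tuples n A" using a0 c i a0i unfolding f_def out_tuples_def
          by (auto intro!: PiE_I simp: PiE_def extensional_def Pi_def)
      next
        fix j and y y' :: "nat \<Rightarrow> 'x" assume "y j = y' j"
        then show "f y j = f y' j" unfolding f_def by auto
      qed (use finA finX in auto)
      moreover have "f x = a" using True unfolding f_def by auto
      moreover have "f x0 \<noteq> a0" using xi c unfolding f_def by (auto simp: fun_eq_iff)
      ultimately show ?thesis using that by blast
    qed
    have "(\<Sum>b\<in>out_tuples n A. \<Sum>y\<in>in_tuples n X. ?st f b y * S b y) = 0"
      using key[OF st] fa0 by simp
    moreover have nn: "\<forall>b\<in>out_tuples n A. \<forall>y\<in>in_tuples n X. 0 \<le> ?st f b y * S b y"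
      using nonnegS by auto
    ultimately have "\<forall>b\<in>out_tuples n A. (\<Sum>y\<in>in_tuples n X. ?st f b y * S b y) = 0"
      using finO by (subst (asm) sum_nonneg_eq_0_iff) (auto intro!: sum_nonneg)
    then have "\<forall>b\<in>out_tuples n A. \<forall>y\<in>in_tuples n X. ?st f b y * S b y = 0"
      using finI nn by (simp add: sum_nonneg_eq_0_iff)
    then have "?st f a x * S a x = 0" using a x by blast
    then show ?thesis using fa by simp
  qed
  have st0: "is_state n A X (?st (\<lambda>y. a0))"
    by (rule det_state) (use finA finX a0 in auto)
  have "(\<Sum>a\<in>out_tuples n A. \<Sum>x\<in>in_tuples n X. ?st (\<lambda>y. a0) a x * S a x) = ?st (\<lambda>y. a0) a0 x0 * S a0 x0"
    by (rule sum_single[OF finO finI a0 x0]) (use Sz in auto)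
  then have "S a0 x0 = R a0 x0" using key[OF st0] by simp
  then show ?thesis using Rz Sz by (metis prod.inject)
qed

end
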